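(* Let $G$ be a ribbon graph. Then (1) $P_{\langle\tau\delta\tau\rangle}(G,x)=P_{\langle\delta\rangle}(G^{\times},x)$; (2) $P_{\langle\delta,\tau\rangle}(G,x)=2^{e(G)}P_{\langle\delta\tau\rangle}(G,x)$.
   Context: A ribbon graph $G=(V(G),E(G))$ is a (orientable or non-orientable) surface with boundary, represented as the union of a set $V(G)$ of vertex discs and a set $E(G)$ of edge discs (ribbons) such that vertices and edges intersect in disjoint line segments, each such segment lies on the boundary of exactly one vertex and exactly one edge, and every edge contains exactly two such segments. $v(G)$, $e(G)$ denote the numbers of vertices and edges. For $A\subseteq E(G)$, the partial dual $G^{\delta(A)}$ is obtained by gluing a disc along each boundary component of the spanning ribbon subgraph $(V(G),A)$ (these discs become the vertex discs), removing the interiors of the original vertex discs, and keeping the edge ribbons. The partial Petrial $G^{\tau(A)}$ adds a half-twist to each edge in $A$; $G^{\times}=G^{\tau(E(G))}$ (Petrie dual, with $E(G^\times)=E(G)$). For a word $w=w_1\cdots w_n$ over $\{\delta,\tau\}$, $G^{w(A)}=(\cdots(G^{w_n(A)})^{w_{n-1}(A)}\cdots)^{w_1(A)}$ (rightmost letter applied first), $G^{1(A)}=G$, and $G^{\xi(A)\pi(B)}=(G^{\xi(A)})^{\pi(B)}$. Vertex polynomials (sums over ordered partitions of $E(G)$ into pairwise disjoint, possibly empty parts): $P_{\langle\delta\rangle}(G,x)=\sum_{A\subseteq E(G)}x^{v(G^{\delta(A)})}$; $P_{\langle\tau\delta\tau\rangle}(G,x)=\sum_{A\subseteq E(G)}x^{v(G^{\tau\delta\tau(A)})}$;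 $P_{\langle\delta\tau\rangle}(G,x)=\sum_{(A_1,A_2,A_3)}x^{v(G^{1(A_1)\tau\delta(A_2)\delta\tau(A_3)})}$; $P_{\langle\delta,\tau\rangle}(G,x)=\sum_{(A_1,\dots,A_6)}x^{v(G^{1(A_1)\delta(A_2)\tau(A_3)\tau\delta(A_4)\delta\tau(A_5)\tau\delta\tau(A_6)})}$. *)

theory Defs
  imports "HOL-Library.FuncSet" "HOL-Computational_Algebra.Polynomial"
begin

text \<open>Combinatorial encoding of (possibly non-orientable) ribbon graphs by flags
(corners of edge ribbons).  Each edge e has the four corners (e, b1, b2).
  rv : follows the boundary arc of a vertex disc to the next corner;
  rs : pairs the two corners of one attaching segment (edge end);
  re : pairs the two corners on the same long side of the edge ribbon.
Vertices with at least one incident edge-end are the orbits of rv, rs;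
vertex discs without incident edges are counted by riso.\<close>

type_synonym 'e flag = "'e \<times> bool \<times> bool"

record 'e rgraph =
  redges :: "'e set"
  riso :: nat
  rv :: "'e flag \<Rightarrow> 'e flag"
  rs :: "'e flag \<Rightarrow> 'e flag"
  re :: "'e flag \<Rightarrow> 'e flag"

definition flags :: "'e rgraph \<Rightarrow> 'e flag set" where
  "flags G = redges G \<times> (UNIV :: (bool \<times> bool) set)"

definition fpf_invol_on :: "'a set \<Rightarrow> ('a \<Rightarrow> 'a) \<Rightarrow> bool" where
  "fpf_invol_on X f \<longleftrightarrow> (\<forall>x\<in>X. f x \<in> X \<and> f (f x) = x \<and> f x \<noteq> x)"

definition ribbon_graph :: "'e rgraph \<Rightarrow> bool" where
  "ribbon_graph G \<longleftrightarrow> finite (redges G)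
     \<and> fpf_invol_on (flags G) (rv G) \<and> fpf_invol_on (flags G) (rs G) \<and> fpf_invol_on (flags G) (re G)
     \<and> (\<forall>x\<in>flags G. fst (rs G x) = fst x \<and> fst (re G x) = fst x
            \<and> rs G (re G x) = re G (rs G x) \<and> rs G x \<noteq> re G x)"

definition vrel :: "'e rgraph \<Rightarrow> ('e flag \<times> 'e flag) set" where
  "vrel G = {(x, rv G x) | x. x \<in> flags G} \<union> {(x, rs G x) | x. x \<in> flags G}"

definition nv :: "'e rgraph \<Rightarrow> nat" where
  "nv G = riso G + card (flags G // (vrel G)\<^sup>*)"

definition ne :: "'e rgraph \<Rightarrow> nat" where
  "ne G = card (redges G)"

definition pdual :: "'e set \<Rightarrow> 'e rgraph \<Rightarrow> 'e rgraph" where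
  "pdual A G = G\<lparr> rs := (\<lambda>x. if fst x \<in> A then re G x else rs G x),
                  re := (\<lambda>x. if fst x \<in> A then rs G x else re G x) \<rparr>"

definition ppetrial :: "'e set \<Rightarrow> 'e rgraph \<Rightarrow> 'e rgraph" where
  "ppetrial A G = G\<lparr> re := (\<lambda>x. if fst x \<in> A then rs G (re G x) else re G x) \<rparr>"

definition petrie :: "'e rgraph \<Rightarrow> 'e rgraph" where
  "petrie G = ppetrial (redges G) G"

text \<open>Words (rightmost letter applied first).\<close>
definition op_td :: "'e set \<Rightarrow> 'e rgraph \<Rightarrow> 'e rgraph" where
  "op_td A G = ppetrial A (pdual A G)"
definition op_dt :: "'e set \<Rightarrow> 'e rgraph \<Rightarrow> 'e rgraph" where
  "op_dt A G = pdual A (ppetrial A G)"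
definition op_tdt :: "'e set \<Rightarrow> 'e rgraph \<Rightarrow> 'e rgraph" where
  "op_tdt A G = ppetrial A (pdual A (ppetrial A G))"

text \<open>Ordered partitions of E into k parts encoded by f in PiE E {0..<k}; part i = A_(i+1).\<close>
definition part :: "'e set \<Rightarrow> ('e \<Rightarrow> nat) \<Rightarrow> nat \<Rightarrow> 'e set" where
  "part E f i = {e \<in> E. f e = i}"

definition P_delta :: "'e rgraph \<Rightarrow> int poly" where
  "P_delta G = (\<Sum>A\<in>Pow (redges G). monom 1 (nv (pdual A G)))"

definition P_tdt :: "'e rgraph \<Rightarrow> int poly" where
  "P_tdt G = (\<Sum>A\<in>Pow (redges G). monom 1 (nv (op_tdt A G)))"

definition P_dt :: "'e rgraph \<Rightarrow> int poly" where
  "P_dt G = (\<Sum>f\<in>redges G \<rightarrow>\<^sub>E {0..<3::nat}.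
      (let E = redges G in monom 1 (nv (op_dt (part E f 2) (op_td (part E f 1) G)))))"

definition P_dtau :: "'e rgraph \<Rightarrow> int poly" where
  "P_dtau G = (\<Sum>f\<in>redges G \<rightarrow>\<^sub>E {0..<6::nat}.
      (let E = redges G in monom 1 (nv
        (op_tdt (part E f 5) (op_dt (part E f 4) (op_td (part E f 3)
          (ppetrial (part E f 2) (pdual (part E f 1) G))))))))"

end

theory Submission
  imports Defs
begin

lemma nv_cong: "redges H = redges G \<Longrightarrow> riso H = riso G \<Longrightarrow> rv H = rv G \<Longrightarrow> (\<And>x. x \<in> flags G \<Longrightarrow> rs H x = rs G x) \<Longrightarrow> nv H = nv G"
proof -
  assume a: "redges H = redges G" "riso H = riso G" "rv H = rv G" "(\<And>x. x \<in> flags G \<Longrightarrow> rs H x = rs G x)"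
  have fl: "flags H = flags G" using a by (simp add: flags_def)
  have "vrel H = vrel G" unfolding vrel_def fl using a by force
  then show ?thesis unfolding nv_def fl using a by simp
qed

lemma rg_fst:
  assumes "ribbon_graph G" "x \<in> flags G"
  shows "fst (re G x) = fst x" "fst (rs G x) = fst x" "re G x \<in> flags G" "rs G x \<in> flags G"
  using assms by (auto simp: ribbon_graph_def fpf_invol_on_def)

lemma smult_sum_right: "smult c (\<Sum>i\<in>S. f i) = (\<Sum>i\<in>S. smult c (f i))"
  by (induct S rule: infinite_finite_induct) (auto simp: smult_add_right)

definition sel :: "'e rgraph \<Rightarrow> ('e \<Rightarrow> nat) \<Rightarrow> 'e flag \<Rightarrow> 'e flag" where
  "sel G g x = (if fst x \<in> redges G \<and> g (fst x) = 1 then re G x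
     else if fst x \<in> redges G \<and> g (fst x) = 2 then rs G (re G x) else rs G x)"

definition psi :: "nat \<Rightarrow> nat" where
  "psi c = (if c = 4 \<or> c = 5 then 2 else c mod 2)"

lemma part1:
  assumes "A \<subseteq> redges G"
  shows "nv (op_tdt A G) = nv (pdual A (petrie G))"
  apply (rule nv_cong)
  using assms by (auto simp: op_tdt_def pdual_def ppetrial_def petrie_def)

definition K :: "'e rgraph \<Rightarrow> nat \<Rightarrow> 'e flag \<Rightarrow> 'e flag" where
  "K G c x = (if c = 1 then rs G x else if c = 2 then re G x else rs G (re G x))"

definition mulk :: "nat \<Rightarrow> nat \<Rightarrow> nat" where
  "mulk c d = 6 - c - d"

lemma rg_facts:
  assumes "ribbon_graph G" "x \<in> flags G"
  shows "rs G (rs G x) = x" "re G (re G x) = x" "rs G (re G x) = re G (rs G x)"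
  using assms by (auto simp: ribbon_graph_def fpf_invol_on_def)

lemma K_flags:
  assumes rg: "ribbon_graph G" and x: "x \<in> flags G"
  shows "K G c x \<in> flags G" "fst (K G c x) = fst x"
  using rg_fst[OF rg x] rg_fst[OF rg rg_fst(3)[OF rg x]] by (auto simp: K_def)

lemma K_mul:
  assumes rg: "ribbon_graph G" and x: "x \<in> flags G"
    and c: "c \<in> {1,2,3}" and d: "d \<in> {1,2,3}" and cd: "c \<noteq> d"
  shows "K G c (K G d x) = K G (mulk c d) x"
proof -
  have ex: "re G x \<in> flags G" "rs G x \<in> flags G" using rg_fst[OF rg x] by auto
  note f = rg_facts[OF rg x] rg_facts[OF rg ex(1)] rg_facts[OF rg ex(2)]
  from c d cd show ?thesis
    by (auto simp: K_def mulk_def f)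
qed

definition rep :: "'e rgraph \<Rightarrow> 'e rgraph \<Rightarrow> ('e \<Rightarrow> nat) \<Rightarrow> ('e \<Rightarrow> nat) \<Rightarrow> bool" where
  "rep G H a b \<longleftrightarrow> redges H = redges G \<and> riso H = riso G \<and> rv H = rv G
     \<and> (\<forall>e\<in>redges G. a e \<in> {1,2,3} \<and> b e \<in> {1,2,3} \<and> a e \<noteq> b e)
     \<and> (\<forall>x\<in>flags G. rs H x = K G (a (fst x)) x \<and> re H x = K G (b (fst x)) x)"

lemma rep_init: "rep G G (\<lambda>_. 1) (\<lambda>_. 2)"
  by (simp add: rep_def K_def)

lemma rep_pdual: "rep G H a b \<Longrightarrow>
   rep G (pdual A H) (\<lambda>e. if e \<in> A then b e else a e) (\<lambda>e. if e \<in> A then a e else b e)"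
  unfolding rep_def pdual_def by force

lemma rep_ppetrial:
  assumes rg: "ribbon_graph G" and r: "rep G H a b"
  shows "rep G (ppetrial A H) a (\<lambda>e. if e \<in> A then mulk (a e) (b e) else b e)"
proof -
  have ab: "\<forall>e\<in>redges G. a e \<in> {1,2,3} \<and> b e \<in> {1,2,3} \<and> a e \<noteq> b e" using r by (simp add: rep_def)
  have m: "\<forall>e\<in>redges G. mulk (a e) (b e) \<in> {1,2,3} \<and> a e \<noteq> mulk (a e) (b e)"
    using ab by (auto simp: mulk_def)
  have "rs H (re H x) = K G (mulk (a (fst x)) (b (fst x))) x" if x: "x \<in> flags G" for x
  proof -
    have e: "fst x \<in> redges G" using x by (auto simp: flags_def)
    have "re H x = K G (b (fst x)) x" using r x by (simp add: rep_def)
    moreover have "K G (b (fst x)) x \<in> flags G" "fst (K G (b (fst x)) x) = fst x"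
      using K_flags[OF rg x] by auto
    ultimately have "rs H (re H x) = K G (a (fst x)) (K G (b (fst x)) x)"
      using r by (simp add: rep_def)
    also have "\<dots> = K G (mulk (a (fst x)) (b (fst x))) x"
      using ab e by (intro K_mul[OF rg x]) auto
    finally show ?thesis .
  qed
  then show ?thesis using r ab m by (auto simp: rep_def ppetrial_def)
qed

lemma rep_nv:
  assumes r: "rep G H a b" and g: "\<And>e. e \<in> redges G \<Longrightarrow> a e = c e"
  shows "nv H = nv (G\<lparr>rs := \<lambda>x. K G (c (fst x)) x\<rparr>)"
  apply (rule nv_cong)
  using r g by (auto simp: rep_def flags_def)

definition code :: "nat \<Rightarrow> nat" where
  "code g = (if g = 1 then 2 else if g = 2 then 3 else 1)"

lemma nv_sel: "nv (G\<lparr>rs := sel G g\<rparr>) = nv (G\<lparr>rs := \<lambda>x. K G (code (g (fst x))) x\<rparr>)"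
  by (rule nv_cong) (auto simp: flags_def sel_def K_def code_def)

lemma dtau_nv: assumes rg: "ribbon_graph G" and f6: "\<forall>e\<in>redges G. f e < 6" shows
  "nv (op_tdt (part (redges G) f 5) (op_dt (part (redges G) f 4) (op_td (part (redges G) f 3)
          (ppetrial (part (redges G) f 2) (pdual (part (redges G) f 1) G)))))
   = nv (G\<lparr>rs := sel G (\<lambda>e. psi (f e))\<rparr>)"
  unfolding nv_sel op_tdt_def op_dt_def op_td_def
  apply (rule rep_nv)
   apply (rule rep_ppetrial[OF rg] rep_pdual)+
   apply (rule rep_init)
  subgoal for e
  proof -
    assume "e \<in> redges G"
    then have "f e \<in> {0,1,2,3,4,5}" using f6 by auto
    then show ?thesis using \<open>e \<in> redges G\<close> by (auto simp: part_def psi_def code_def mulk_def)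
  qed
  done

lemma dt_nv: assumes rg: "ribbon_graph G" shows
  "nv (op_dt (part (redges G) g 2) (op_td (part (redges G) g 1) G))
   = nv (G\<lparr>rs := sel G g\<rparr>)"
  unfolding nv_sel op_dt_def op_td_def
  apply (rule rep_nv)
   apply (rule rep_ppetrial[OF rg] rep_pdual)+
   apply (rule rep_init)
  apply (simp add: part_def code_def mulk_def)
  done

lemma sel_cong: "(\<And>e. e \<in> redges G \<Longrightarrow> g e = h e) \<Longrightarrow> sel G g = sel G h"
  by (rule ext) (auto simp: sel_def)

lemma fib_card: "k < 3 \<Longrightarrow> card {c \<in> {0..<6::nat}. psi c = k} = 2"
proof -
  assume "k < 3"
  then consider "k = 0" | "k = 1" | "k = 2" by linarith
  then show ?thesis
  proof cases
    case 1
    have "{c \<in> {0..<6::nat}. psi c = k} = {0,2}" using 1 by (auto simp: psi_def)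
    then show ?thesis by simp
  next
    case 2
    have "{c \<in> {0..<6::nat}. psi c = k} = {1,3}" using 2 by (auto simp: psi_def) presburger
    then show ?thesis by simp
  next
    case 3
    have "{c \<in> {0..<6::nat}. psi c = k} = {4,5}" using 3 by (auto simp: psi_def)
    then show ?thesis by simp
  qed
qed

theorem mainTheorem3:
  fixes G :: "'e rgraph"
  assumes "ribbon_graph G"
  shows "P_tdt G = P_delta (petrie G) \<and> P_dtau G = smult (2 ^ ne G) (P_dt G)"
proof
  show "P_tdt G = P_delta (petrie G)"
    unfolding P_tdt_def P_delta_def
  proof (rule sum.cong)
    show "Pow (redges G) = Pow (redges (petrie G))" by (simp add: petrie_def ppetrial_def)
    fix A assume "A \<in> Pow (redges (petrie G))"
    then have "A \<subseteq> redges G" by (simp add: petrie_def ppetrial_def)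
    then show "monom 1 (nv (op_tdt A G)) = monom 1 (nv (pdual A (petrie G)))"
      using part1[of A G] by simp
  qed
next
  define E where "E = redges G"
  have fin: "finite E" using assms by (simp add: ribbon_graph_def E_def)
  define h where "h g = (monom 1 (nv (G\<lparr>rs := sel G g\<rparr>)) :: int poly)" for g
  define phi where "phi f = restrict (\<lambda>e. psi (f e)) E" for f :: "'e \<Rightarrow> nat"
  have "P_dtau G = (\<Sum>f\<in>E \<rightarrow>\<^sub>E {0..<6::nat}. h (phi f))"
    unfolding P_dtau_def Let_def E_def[symmetric]
  proof (rule sum.cong[OF refl])
    fix f assume "f \<in> E \<rightarrow>\<^sub>E {0..<6::nat}"
    then have f6: "\<forall>e\<in>redges G. f e < 6" by (auto simp: E_def)
    have "sel G (\<lambda>e. psi (f e)) = sel G (phi f)"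
      by (rule sel_cong) (simp add: phi_def E_def)
    then show "monom 1 (nv (op_tdt (part E f 5) (op_dt (part E f 4) (op_td (part E f 3)
          (ppetrial (part E f 2) (pdual (part E f 1) G)))))) = h (phi f)"
      using dtau_nv[OF assms, of f] f6 by (simp add: h_def E_def)
  qed
  also have "\<dots> = (\<Sum>g\<in>E \<rightarrow>\<^sub>E {0..<3::nat}. (\<Sum>f\<in>{f \<in> E \<rightarrow>\<^sub>E {0..<6::nat}. phi f = g}. h (phi f)))"
    by (rule sum.group[symmetric]) (auto simp: fin finite_PiE phi_def psi_def)
  also have "\<dots> = (\<Sum>g\<in>E \<rightarrow>\<^sub>E {0..<3::nat}. smult (2 ^ card E) (h g))"
  proof (rule sum.cong[OF refl])
    fix g assume g: "g \<in> E \<rightarrow>\<^sub>E {0..<3::nat}"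
    have eq: "{f \<in> E \<rightarrow>\<^sub>E {0..<6::nat}. phi f = g} = (\<Pi>\<^sub>E e\<in>E. {c \<in> {0..<6::nat}. psi c = g e})"
    proof (intro set_eqI iffI)
      fix f assume "f \<in> {f \<in> E \<rightarrow>\<^sub>E {0..<6::nat}. phi f = g}"
      then show "f \<in> (\<Pi>\<^sub>E e\<in>E. {c \<in> {0..<6::nat}. psi c = g e})"
        by (auto simp: phi_def PiE_def Pi_def restrict_def extensional_def dest: fun_cong)
    next
      fix f assume "f \<in> (\<Pi>\<^sub>E e\<in>E. {c \<in> {0..<6::nat}. psi c = g e})"
      then show "f \<in> {f \<in> E \<rightarrow>\<^sub>E {0..<6::nat}. phi f = g}"
        using g by (auto simp: phi_def PiE_def Pi_def restrict_def extensional_def intro!: ext)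
    qed
    have c: "card {f \<in> E \<rightarrow>\<^sub>E {0..<6::nat}. phi f = g} = 2 ^ card E"
    proof -
      have "card (\<Pi>\<^sub>E e\<in>E. {c \<in> {0..<6::nat}. psi c = g e}) = (\<Prod>e\<in>E. card {c \<in> {0..<6::nat}. psi c = g e})"
        using fin by (rule card_PiE)
      also have "\<dots> = (\<Prod>e\<in>E. 2)"
        using g by (intro prod.cong refl fib_card) auto
      finally show ?thesis unfolding eq by simp
    qed
    have "(\<Sum>f\<in>{f \<in> E \<rightarrow>\<^sub>E {0..<6::nat}. phi f = g}. h (phi f))
        = (\<Sum>f\<in>{f \<in> E \<rightarrow>\<^sub>E {0..<6::nat}. phi f = g}. h g)" by simp
    also have "\<dots> = of_nat (2 ^ card E) * h g" using c by simp
    also have "\<dots> = smult (2 ^ card E) (h g)" by (simp add: of_nat_poly)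
    finally show "(\<Sum>f\<in>{f \<in> E \<rightarrow>\<^sub>E {0..<6::nat}. phi f = g}. h (phi f)) = smult (2 ^ card E) (h g)" .
  qed
  also have "\<dots> = smult (2 ^ ne G) (P_dt G)"
    unfolding P_dt_def Let_def smult_sum_right E_def[symmetric] ne_def
    using dt_nv[OF assms] by (simp add: h_def E_def)
  finally show "P_dtau G = smult (2 ^ ne G) (P_dt G)" .
qed

end
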